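(* Let $s=\tfrac12$ and $\lambda\in\mathbb{C}$. The only odd superderivation of $\mathfrak{L}^{1/2}_\lambda$ of degree $0$ is the zero map; in particular it coincides with the (zero) space of odd inner derivations of degree $0$.
   Context: For $s\in\{0,\tfrac12\}$ and $\lambda\in\mathbb{C}$, $\mathfrak{L}^s_\lambda$ is the complex Lie superalgebra with basis $\{L_m,I_m,G_p,H_p : m\in\mathbb{Z},\ p\in s+\mathbb{Z}\}$, even part spanned by the $L_m,I_m$, odd part spanned by the $G_p,H_p$, with brackets $[L_m,L_n]=(m-n)L_{m+n}$, $[L_m,I_n]=(m-n)I_{m+n}$, $[L_m,H_p]=(\tfrac m2-p)H_{m+p}$, $[L_m,G_p]=(\tfrac m2-p)G_{m+p}+\lambda(m+1)H_{m+p}$, $[I_m,G_p]=(m-2p)H_{m+p}$, $[G_p,G_q]=I_{p+q}$, plus super-antisymmetry; other brackets of basis elements are zero. $\mathfrak{L}_r$ is spanned by basis elements of index $r$. A superderivation of parity $a$ is a linear map shifting parity by $a$ and satisfying $D([x,y])=[D(x),y]+(-1)^{a|x|}[x,D(y)]$; it has degree $r$ if $D(\mathfrak{L}_q)\subset\mathfrak{L}_{q+r}$. *)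

theory Defs
  imports Complex_Main
begin

text \<open>Basis of the Lie superalgebra L^s_lambda for s = 1/2.
  Convention: G k and H k stand for G_p and H_p with p = k + 1/2 (k an integer),
  so that the odd indices range over 1/2 + Z.\<close>

datatype sbasis = L int | I int | G int | H int

fun sdeg :: "sbasis \<Rightarrow> rat" where
  "sdeg (L m) = of_int m"
| "sdeg (I m) = of_int m"
| "sdeg (G k) = of_int k + 1/2"
| "sdeg (H k) = of_int k + 1/2"

fun sodd :: "sbasis \<Rightarrow> bool" where
  "sodd (L _) = False"
| "sodd (I _) = False"
| "sodd (G _) = True"
| "sodd (H _) = True"

definition single :: "sbasis \<Rightarrow> complex \<Rightarrow> sbasis \<Rightarrow> complex" where
  "single b c = (\<lambda>x. if x = b then c else 0)"

fun bb :: "complex \<Rightarrow> sbasis \<Rightarrow> sbasis \<Rightarrow> sbasis \<Rightarrow> complex" where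
  "bb lam (L m) (L n) = single (L (m + n)) (of_int (m - n))"
| "bb lam (L m) (I n) = single (I (m + n)) (of_int (m - n))"
| "bb lam (I n) (L m) = single (I (m + n)) (- of_int (m - n))"
| "bb lam (L m) (H k) = single (H (m + k)) (of_int m / 2 - (of_int k + 1/2))"
| "bb lam (H k) (L m) = single (H (m + k)) (- (of_int m / 2 - (of_int k + 1/2)))"
| "bb lam (L m) (G k) = (\<lambda>x. single (G (m + k)) (of_int m / 2 - (of_int k + 1/2)) x
                             + single (H (m + k)) (lam * of_int (m + 1)) x)"
| "bb lam (G k) (L m) = (\<lambda>x. - (single (G (m + k)) (of_int m / 2 - (of_int k + 1/2)) x
                             + single (H (m + k)) (lam * of_int (m + 1)) x))"
| "bb lam (I m) (G k) = single (H (m + k)) (of_int m - 2 * (of_int k + 1/2))"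
| "bb lam (G k) (I m) = single (H (m + k)) (- (of_int m - 2 * (of_int k + 1/2)))"
| "bb lam (G k) (G l) = single (I (k + l + 1)) 1"
| "bb lam _ _ = (\<lambda>x. 0)"

text \<open>Elements of the superalgebra: finitely supported coefficient functions.\<close>
definition ssupp :: "(sbasis \<Rightarrow> complex) \<Rightarrow> sbasis set" where
  "ssupp f = {b. f b \<noteq> 0}"

definition scarrier :: "(sbasis \<Rightarrow> complex) set" where
  "scarrier = {f. finite (ssupp f)}"

definition sbrk :: "complex \<Rightarrow> (sbasis \<Rightarrow> complex) \<Rightarrow> (sbasis \<Rightarrow> complex) \<Rightarrow> (sbasis \<Rightarrow> complex)" where
  "sbrk lam f g = (\<lambda>c. \<Sum>a\<in>ssupp f. \<Sum>b\<in>ssupp g. f a * g b * bb lam a b c)"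

definition homog_par :: "bool \<Rightarrow> (sbasis \<Rightarrow> complex) \<Rightarrow> bool" where
  "homog_par a x \<longleftrightarrow> x \<in> scarrier \<and> (\<forall>b\<in>ssupp x. sodd b = a)"

definition in_deg :: "rat \<Rightarrow> (sbasis \<Rightarrow> complex) \<Rightarrow> bool" where
  "in_deg q x \<longleftrightarrow> x \<in> scarrier \<and> (\<forall>b\<in>ssupp x. sdeg b = q)"

definition slinear :: "((sbasis \<Rightarrow> complex) \<Rightarrow> (sbasis \<Rightarrow> complex)) \<Rightarrow> bool" where
  "slinear D \<longleftrightarrow> (\<forall>x\<in>scarrier. D x \<in> scarrier)
     \<and> (\<forall>x\<in>scarrier. \<forall>y\<in>scarrier. D (\<lambda>b. x b + y b) = (\<lambda>b. D x b + D y b))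
     \<and> (\<forall>c. \<forall>x\<in>scarrier. D (\<lambda>b. c * x b) = (\<lambda>b. c * D x b))"

definition odd_superderivation :: "complex \<Rightarrow> ((sbasis \<Rightarrow> complex) \<Rightarrow> (sbasis \<Rightarrow> complex)) \<Rightarrow> bool" where
  "odd_superderivation lam D \<longleftrightarrow> slinear D
     \<and> (\<forall>a x. homog_par a x \<longrightarrow> homog_par (\<not> a) (D x))
     \<and> (\<forall>a x y. homog_par a x \<longrightarrow> (\<exists>a'. homog_par a' y) \<longrightarrow>
          D (sbrk lam x y) = (\<lambda>c. sbrk lam (D x) y c + (if a then -1 else 1) * sbrk lam x (D y) c))"

definition has_degree :: "rat \<Rightarrow> ((sbasis \<Rightarrow> complex) \<Rightarrow> (sbasis \<Rightarrow> complex)) \<Rightarrow> bool" where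
  "has_degree r D \<longleftrightarrow> (\<forall>q x. in_deg q x \<longrightarrow> in_deg (q + r) (D x))"

end

theory Submission
  imports Defs
begin

lemma half_ne: "(of_int m :: rat) \<noteq> of_int k + 1/2"
proof
  assume "(of_int m :: rat) = of_int k + 1/2"
  then have "(of_int (2*m) :: rat) = of_int (2*k+1)" by simp
  then have "2*m = 2*k+1" by (simp only: of_int_eq_iff)
  then show False by presburger
qed

lemma par_deg: "sodd c \<noteq> sodd b \<Longrightarrow> sdeg c \<noteq> sdeg b"
  proof (cases c; cases b)
qed (auto simp: half_ne dest: sym[THEN half_ne[THEN notE]] intro: half_ne[THEN notE])

lemma single_carrier: "single b c \<in> scarrier"
proof -
  have "ssupp (single b c) \<subseteq> {b}" by (auto simp: ssupp_def single_def)
  then show ?thesis unfolding scarrier_def by (auto intro: finite_subset)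
qed

lemma D_basis:
  assumes "odd_superderivation lam D" and "has_degree 0 D"
  shows "D (single b 1) = (\<lambda>x. 0)"
proof -
  have h: "homog_par (sodd b) (single b 1)"
    using single_carrier by (auto simp: homog_par_def ssupp_def single_def split: if_splits)
  have d: "in_deg (sdeg b) (single b 1)"
    using single_carrier by (auto simp: in_deg_def ssupp_def single_def split: if_splits)
  have h2: "homog_par (\<not> sodd b) (D (single b 1))" using assms(1) h
    unfolding odd_superderivation_def by blast
  have d2: "in_deg (sdeg b) (D (single b 1))" using assms(2) d
    unfolding has_degree_def by force
  have "ssupp (D (single b 1)) = {}"
  proof (rule ccontr)
    assume "ssupp (D (single b 1)) \<noteq> {}"
    then obtain c where c: "c \<in> ssupp (D (single b 1))" by blast
    then have "sodd c \<noteq> sodd b" "sdeg c = sdeg b" using h2 d2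
      by (auto simp: homog_par_def in_deg_def)
    then show False using par_deg by blast
  qed
  then show ?thesis by (auto simp: ssupp_def)
qed

lemma D_zero_all:
  assumes "odd_superderivation lam D" and "has_degree 0 D" and "y \<in> scarrier"
  shows "D y = (\<lambda>b. 0)"
proof -
  have lin: "slinear D" using assms(1) by (simp add: odd_superderivation_def)
  define f where "f S = (\<lambda>x. \<Sum>b\<in>S. y b * single b 1 x)" for S
  have fc: "finite S \<Longrightarrow> f S \<in> scarrier" for S
  proof -
    assume "finite S"
    have "ssupp (f S) \<subseteq> S"
    proof
      fix x assume "x \<in> ssupp (f S)"
      then show "x \<in> S"
        by (rule contrapos_pp) (auto simp: ssupp_def f_def single_def intro!: sum.neutral)
    qed
    then show ?thesis using \<open>finite S\<close> unfolding scarrier_def by (auto intro: finite_subset)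
  qed
  have z: "D (\<lambda>x. 0) = (\<lambda>x. 0)"
  proof -
    have "D (\<lambda>b. 0 * single undefined 1 b) = (\<lambda>b. 0 * D (single undefined 1) b)"
      using lin single_carrier unfolding slinear_def by blast
    then show ?thesis by simp
  qed
  have "finite S \<Longrightarrow> D (f S) = (\<lambda>x. 0)" for S
  proof (induction S rule: finite_induct)
    case empty
    then show ?case using z by (simp add: f_def)
  next
    case (insert b S)
    have e: "f (insert b S) = (\<lambda>x. f S x + (\<lambda>x. y b * single b 1 x) x)"
      using insert by (auto simp: f_def add.commute)
    have sc: "(\<lambda>x. y b * single b 1 x) \<in> scarrier"
    proof -
      have "(\<lambda>x. y b * single b 1 x) = single b (y b)" by (auto simp: single_def)
      then show ?thesis using single_carrier by simp
    qed
    have "D (f (insert b S)) = (\<lambda>x. D (f S) x + D (\<lambda>x. y b * single b 1 x) x)"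
    proof -
      have "\<forall>x\<in>scarrier. \<forall>y\<in>scarrier. D (\<lambda>b. x b + y b) = (\<lambda>b. D x b + D y b)"
        using lin unfolding slinear_def by blast
      from this[rule_format, OF fc[OF insert(1)] sc] show ?thesis unfolding e by simp
    qed
    also have "D (\<lambda>x. y b * single b 1 x) = (\<lambda>x. y b * D (single b 1) x)"
      using lin single_carrier unfolding slinear_def by blast
    finally show ?case using insert(3) D_basis[OF assms(1,2)] by simp
  qed
  moreover have "f (ssupp y) = y"
  proof
    fix x
    show "f (ssupp y) x = y x"
    proof -
      have fin: "finite (ssupp y)" using assms(3) by (simp add: scarrier_def)
      have "f (ssupp y) x = (\<Sum>b\<in>ssupp y. if x = b then y b else 0)"
        unfolding f_def single_def by (intro sum.cong) auto
      also have "\<dots> = y x" using fin by (simp add: sum.delta ssupp_def)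
      finally show ?thesis .
    qed
  qed
  ultimately show ?thesis using assms(3) by (metis mem_Collect_eq scarrier_def)
qed

lemma odd_deg0: "homog_par True x \<Longrightarrow> in_deg 0 x \<Longrightarrow> ssupp x = {}"
proof (rule ccontr)
  assume a: "homog_par True x" "in_deg 0 x" "ssupp x \<noteq> {}"
  then obtain c where c: "c \<in> ssupp x" by blast
  then have "sodd c" "sdeg c = 0" using a by (auto simp: homog_par_def in_deg_def)
  then have "sdeg c = sdeg (L 0)" by simp
  with \<open>sodd c\<close> show False using par_deg[of c "L 0"] by simp
qed

theorem lemma2p9:
  fixes lam :: complex
    and D :: "(sbasis \<Rightarrow> complex) \<Rightarrow> (sbasis \<Rightarrow> complex)"
  assumes "odd_superderivation lam D" and "has_degree 0 D"
  shows "(\<forall>y\<in>scarrier. D y = (\<lambda>b. 0))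
    \<and> (\<forall>x. homog_par True x \<and> in_deg 0 x \<longrightarrow> (\<forall>y\<in>scarrier. sbrk lam x y = (\<lambda>b. 0)))
    \<and> (\<exists>x. homog_par True x \<and> in_deg 0 x \<and> (\<forall>y\<in>scarrier. D y = sbrk lam x y))"
proof -
  have 1: "\<forall>y\<in>scarrier. D y = (\<lambda>b. 0)" using D_zero_all[OF assms] by blast
  have 2: "\<forall>x. homog_par True x \<and> in_deg 0 x \<longrightarrow> (\<forall>y\<in>scarrier. sbrk lam x y = (\<lambda>b. 0))"
    using odd_deg0 by (simp add: sbrk_def)
  have zc: "(\<lambda>b. 0::complex) \<in> scarrier" by (simp add: scarrier_def ssupp_def)
  have "homog_par True (\<lambda>b. 0) \<and> in_deg 0 (\<lambda>b. 0)"
    using zc by (simp add: homog_par_def in_deg_def ssupp_def)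
  moreover have "\<forall>y\<in>scarrier. D y = sbrk lam (\<lambda>b. 0) y"
    using 1 by (simp add: sbrk_def ssupp_def)
  ultimately show ?thesis using 1 2 by blast
qed

end
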